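(* Assume $\psi$ has conductor $\mathfrak o$ and the Haar measure on $F$ gives $\mathfrak o$ volume $1$. Let $(\pi,V)$ be a smooth representation of $\mathrm{GSp}(4,F)$ and $p:V\to V_{Z^J,\psi}$ the projection. For every $w\in V_{Z^J,\psi}$ there exists a unique $v\in V$ such that: (i) $p(v)=w$; (ii) $\pi(z(x))v=v$ for all $x\in\mathfrak o$; (iii) $\int_{\mathfrak p^{-1}}\pi(z(x))v\,dx=0$; (iv) $\pi(d(c))v=v$ for all $c\in\mathfrak o^\times$.
   Context: $F$ non-archimedean local field of characteristic zero with ring of integers $\mathfrak o$ and maximal ideal $\mathfrak p$; $\psi$ a non-trivial character of $F$; conductor $\mathfrak o$ means $\psi$ is trivial on $\mathfrak o$ but not on $\mathfrak p^{-1}$. $\mathrm{GSp}(4,F)$: similitudes of $J=\begin{bmatrix}&&&1\\&&1\\&-1\\-1\end{bmatrix}$. $d(c)=\mathrm{diag}(1,1,c,c)$, $z(x)=1_4+xE_{14}$ (identity matrix with $x$ in position $(1,4)$), $Z^J=\{z(x)\}$, $V_{Z^J,\psi}=V/\mathrm{span}\{\pi(z(x))v-\psi(x)v: x\in F,v\in V\}$. *)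

theory Defs
  imports "HOL-Analysis.Analysis"
begin

text \<open>val is a normalized discrete valuation on F (its value at 0 is irrelevant).
  pp val n is the fractional ideal p^n = {x. x = 0 or val x >= n}; pp val 0 is the ring of integers o.\<close>

definition pp :: "('a::field \<Rightarrow> int) \<Rightarrow> int \<Rightarrow> 'a set" where
  "pp val n = {x. x = 0 \<or> n \<le> val x}"

definition is_reps :: "('a::field \<Rightarrow> int) \<Rightarrow> int \<Rightarrow> int \<Rightarrow> 'a set \<Rightarrow> bool" where
  "is_reps val m n R \<longleftrightarrow> finite R \<and> R \<subseteq> pp val m \<and>
     (\<forall>x\<in>pp val m. \<exists>!r\<in>R. x - r \<in> pp val n)"

definition nonarch_local_field :: "('a::field_char_0 \<Rightarrow> int) \<Rightarrow> bool" where
  "nonarch_local_field val \<longleftrightarrow>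
     (\<forall>x y. x \<noteq> 0 \<and> y \<noteq> 0 \<longrightarrow> val (x * y) = val x + val y) \<and>
     (\<forall>x y. x \<noteq> 0 \<and> y \<noteq> 0 \<and> x + y \<noteq> 0 \<longrightarrow> min (val x) (val y) \<le> val (x + y)) \<and>
     (\<forall>n. \<exists>x. x \<noteq> 0 \<and> val x = n) \<and>
     (\<forall>s::nat \<Rightarrow> 'a. (\<forall>n. \<exists>N. \<forall>i\<ge>N. \<forall>j\<ge>N. s i - s j \<in> pp val n) \<longrightarrow>
        (\<exists>L. \<forall>n. \<exists>N. \<forall>i\<ge>N. s i - L \<in> pp val n)) \<and>
     (\<exists>R. is_reps val 0 1 R)"

definition units_o :: "('a::field \<Rightarrow> int) \<Rightarrow> 'a set" where
  "units_o val = {c. c \<noteq> 0 \<and> val c = 0}"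

definition conductor_o_char :: "('a::field \<Rightarrow> int) \<Rightarrow> ('a \<Rightarrow> complex) \<Rightarrow> bool" where
  "conductor_o_char val \<psi> \<longleftrightarrow>
     (\<forall>x y. \<psi> (x + y) = \<psi> x * \<psi> y) \<and> (\<forall>x. \<psi> x \<noteq> 0) \<and>
     (\<forall>x\<in>pp val 0. \<psi> x = 1) \<and> (\<exists>x\<in>pp val (-1). \<psi> x \<noteq> 1)"

text \<open>Integral over p^m of a locally constant V-valued function, w.r.t. the Haar measure
  with vol(o) = 1 (so vol(p^n) = 1/[o:p^n] for n >= 0): choose n so large that f is constant
  on cosets of p^n in p^m and sum over coset representatives.\<close>

definition haar_int :: "('a::field \<Rightarrow> int) \<Rightarrow> (complex \<Rightarrow> 'v \<Rightarrow> 'v) \<Rightarrow> int \<Rightarrow> ('a \<Rightarrow> 'v::ab_group_add) \<Rightarrow> 'v" where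
  "haar_int val sc m f = (THE I. \<exists>n. max 0 m \<le> n \<and>
      (\<forall>x\<in>pp val m. \<forall>y\<in>pp val n. f (x + y) = f x) \<and>
      (\<forall>R S. is_reps val m n R \<longrightarrow> is_reps val 0 n S \<longrightarrow>
          I = (\<Sum>r\<in>R. sc (1 / of_nat (card S)) (f r))))"

text \<open>Indices of the numeral type 4 are 1,2,3 and 4 (= 0 in that type).\<close>

definition Jmat :: "'a::comm_ring_1 ^ 4 ^ 4" where
  "Jmat = (\<chi> i j. if i = 1 \<and> j = 4 then 1 else if i = 2 \<and> j = 3 then 1
                  else if i = 3 \<and> j = 2 then -1 else if i = 4 \<and> j = 1 then -1 else 0)"

definition GSp4 :: "('a::field ^ 4 ^ 4) set" where
  "GSp4 = {g. \<exists>s. s \<noteq> 0 \<and> transpose g ** Jmat ** g = (\<chi> i j. s * Jmat $ i $ j)}"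

definition dmat :: "'a::field \<Rightarrow> 'a ^ 4 ^ 4" where
  "dmat c = (\<chi> i j. if i = j then (if i = 3 \<or> i = 4 then c else 1) else 0)"

definition zmat :: "'a::field \<Rightarrow> 'a ^ 4 ^ 4" where
  "zmat x = (\<chi> i j. if i = j then 1 else if i = 1 \<and> j = 4 then x else 0)"

definition smooth_rep :: "('a::field \<Rightarrow> int) \<Rightarrow> (complex \<Rightarrow> 'v \<Rightarrow> 'v) \<Rightarrow> ('a ^ 4 ^ 4 \<Rightarrow> 'v \<Rightarrow> 'v::ab_group_add) \<Rightarrow> bool" where
  "smooth_rep val sc \<pi> \<longleftrightarrow>
     vector_space sc \<and>
     (\<forall>g\<in>GSp4. Vector_Spaces.linear sc sc (\<pi> g)) \<and>
     \<pi> (mat 1) = id \<and>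
     (\<forall>g\<in>GSp4. \<forall>h\<in>GSp4. \<pi> (g ** h) = \<pi> g \<circ> \<pi> h) \<and>
     (\<forall>v. \<exists>n\<ge>1. \<forall>g\<in>GSp4. (\<forall>i j. (g - mat 1) $ i $ j \<in> pp val n) \<longrightarrow> \<pi> g v = v)"

definition ZJ_kernel :: "(complex \<Rightarrow> 'v \<Rightarrow> 'v) \<Rightarrow> ('a::field ^ 4 ^ 4 \<Rightarrow> 'v \<Rightarrow> 'v::ab_group_add) \<Rightarrow> ('a \<Rightarrow> complex) \<Rightarrow> 'v set" where
  "ZJ_kernel sc \<pi> \<psi> = module.span sc {\<pi> (zmat x) v - sc (\<psi> x) v | x v. True}"

definition ZJ_proj :: "(complex \<Rightarrow> 'v \<Rightarrow> 'v) \<Rightarrow> ('a::field ^ 4 ^ 4 \<Rightarrow> 'v \<Rightarrow> 'v::ab_group_add) \<Rightarrow> ('a \<Rightarrow> complex) \<Rightarrow> 'v \<Rightarrow> 'v set" where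
  "ZJ_proj sc \<pi> \<psi> v = {v + u | u. u \<in> ZJ_kernel sc \<pi> \<psi>}"

definition ZJ_coinv :: "(complex \<Rightarrow> 'v \<Rightarrow> 'v) \<Rightarrow> ('a::field ^ 4 ^ 4 \<Rightarrow> 'v \<Rightarrow> 'v::ab_group_add) \<Rightarrow> ('a \<Rightarrow> complex) \<Rightarrow> 'v set set" where
  "ZJ_coinv sc \<pi> \<psi> = range (ZJ_proj sc \<pi> \<psi>)"

end

theory Submission
  imports Defs
begin


lemma sum4: "sum f (UNIV::4 set) = f 1 + f 2 + f 3 + f 4"
  by (rule sum_4)

lemma zmat_mult: "zmat x ** zmat y = zmat (x + y)"
  by (simp add: zmat_def matrix_matrix_mult_def vec_eq_iff sum_4 forall_4)

lemma dmat_mult: "dmat x ** dmat y = dmat (x * y)"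
  by (simp add: dmat_def matrix_matrix_mult_def vec_eq_iff sum_4 forall_4)

lemma zd_comm: "zmat y ** dmat c = dmat c ** zmat (c * y)"
  by (simp add: zmat_def dmat_def matrix_matrix_mult_def vec_eq_iff sum_4 forall_4)

lemma zmat0: "zmat 0 = mat 1" by (simp add: zmat_def mat_def vec_eq_iff forall_4)
lemma dmat1: "dmat 1 = mat 1" by (simp add: dmat_def mat_def vec_eq_iff forall_4)

lemma zmat_GSp: "zmat x \<in> GSp4"
  unfolding GSp4_def mem_Collect_eq
  by (rule exI[of _ 1]) (simp add: zmat_def Jmat_def transpose_def matrix_matrix_mult_def vec_eq_iff sum_4 forall_4)

lemma dmat_GSp: "c \<noteq> 0 \<Longrightarrow> dmat c \<in> GSp4"
  unfolding GSp4_def mem_Collect_eq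
  by (rule exI[of _ c]) (simp add: dmat_def Jmat_def transpose_def matrix_matrix_mult_def vec_eq_iff sum_4 forall_4)

lemma zmat_sub: "(zmat x - mat 1) $ i $ j = (if i = 1 \<and> j = 4 then x else 0)"
  using exhaust_4[of i] exhaust_4[of j] by (auto simp: zmat_def mat_def)

lemma dmat_sub: "(dmat c - mat 1) $ i $ j = (if i = j \<and> (i = 3 \<or> i = 4) then c - 1 else 0)"
  using exhaust_4[of i] exhaust_4[of j] by (auto simp: dmat_def mat_def)


locale vf =
  fixes val :: "'a::field_char_0 \<Rightarrow> int"
  assumes NA: "nonarch_local_field val"
begin

lemma vmult: "x \<noteq> 0 \<Longrightarrow> y \<noteq> 0 \<Longrightarrow> val (x * y) = val x + val y"
  using NA unfolding nonarch_local_field_def by blast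
lemma vadd: "x \<noteq> 0 \<Longrightarrow> y \<noteq> 0 \<Longrightarrow> x + y \<noteq> 0 \<Longrightarrow> min (val x) (val y) \<le> val (x + y)"
  using NA unfolding nonarch_local_field_def by blast
lemma vsurj: "\<exists>x. x \<noteq> 0 \<and> val x = n"
  using NA unfolding nonarch_local_field_def by blast
lemma resfin: "\<exists>R. is_reps val 0 1 R"
  using NA unfolding nonarch_local_field_def by blast

lemma v1: "val 1 = 0"
  using vmult[of 1 1] by simp
lemma vm1: "val (-1) = 0"
  using vmult[of "-1" "-1"] by (simp add: v1)
lemma vneg: "x \<noteq> 0 \<Longrightarrow> val (- x) = val x"
  using vmult[of "-1" x] by (simp add: vm1)
lemma vinv: "x \<noteq> 0 \<Longrightarrow> val (inverse x) = - val x"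
  using vmult[of x "inverse x"] by (simp add: v1)

lemma pp_iff: "x \<noteq> 0 \<Longrightarrow> x \<in> pp val n \<longleftrightarrow> n \<le> val x"
  by (simp add: pp_def)
lemma pp0[simp]: "0 \<in> pp val n" by (simp add: pp_def)
lemma pp_neg: "x \<in> pp val n \<Longrightarrow> - x \<in> pp val n"
  by (cases "x = 0") (auto simp: pp_def vneg)
lemma pp_neg_iff[simp]: "- x \<in> pp val n \<longleftrightarrow> x \<in> pp val n"
  using pp_neg[of x n] pp_neg[of "-x" n] by auto
lemma pp_add: "x \<in> pp val n \<Longrightarrow> y \<in> pp val n \<Longrightarrow> x + y \<in> pp val n"
proof -
  assume a: "x \<in> pp val n" "y \<in> pp val n"
  show ?thesis
  proof (cases "x = 0 \<or> y = 0 \<or> x + y = 0")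
    case True thus ?thesis using a by auto
  next
    case False thus ?thesis using a vadd[of x y] by (auto simp: pp_def)
  qed
qed
lemma pp_diff: "x \<in> pp val n \<Longrightarrow> y \<in> pp val n \<Longrightarrow> x - y \<in> pp val n"
  using pp_add[of x n "-y"] by simp
lemma pp_swap: "x - y \<in> pp val n \<Longrightarrow> y - x \<in> pp val n"
  using pp_neg[of "x - y" n] by simp
lemma pp_mono: "m \<le> n \<Longrightarrow> x \<in> pp val n \<Longrightarrow> x \<in> pp val m"
  by (auto simp: pp_def)
lemma pp_mult: "x \<in> pp val a \<Longrightarrow> y \<in> pp val b \<Longrightarrow> x * y \<in> pp val (a + b)"
  by (cases "x = 0 \<or> y = 0") (auto simp: pp_def vmult)
lemma pp_divide: "x \<in> pp val a \<Longrightarrow> c \<noteq> 0 \<Longrightarrow> x / c \<in> pp val (a - val c)"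
  using pp_mult[of x a "inverse c" "- val c"] by (simp add: pp_iff vinv divide_inverse)
lemma pp_cmult: "x \<in> pp val a \<Longrightarrow> c \<noteq> 0 \<Longrightarrow> c * x \<in> pp val (val c + a)"
  using pp_mult[of c "val c" x a] by (simp add: pp_iff)
lemma one_pp0: "1 \<in> pp val 0" by (simp add: pp_def v1)
lemma one_npp1: "1 \<notin> pp val 1" by (simp add: pp_def v1)
lemma not_pp_val: "x \<notin> pp val n \<Longrightarrow> x \<noteq> 0 \<and> val x < n"
  by (auto simp: pp_def)

lemma unit_iff: "c \<in> pp val 0 \<Longrightarrow> c \<in> units_o val \<longleftrightarrow> c \<notin> pp val 1"
  by (auto simp: units_o_def pp_def)
lemma unit_nz: "c \<in> units_o val \<Longrightarrow> c \<noteq> 0" by (simp add: units_o_def)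
lemma unit_val: "c \<in> units_o val \<Longrightarrow> val c = 0" by (simp add: units_o_def)
lemma unit_pp0: "c \<in> units_o val \<Longrightarrow> c \<in> pp val 0" by (simp add: units_o_def pp_def)
lemma unit_inv: "c \<in> units_o val \<Longrightarrow> inverse c \<in> units_o val"
  by (simp add: units_o_def vinv)
lemma unit_mult: "c \<in> units_o val \<Longrightarrow> d \<in> units_o val \<Longrightarrow> c * d \<in> units_o val"
  by (simp add: units_o_def vmult)
lemma unit_mult_pp: "c \<in> units_o val \<Longrightarrow> x \<in> pp val n \<longleftrightarrow> c * x \<in> pp val n"
  by (cases "x = 0") (auto simp: units_o_def pp_def vmult)

lemma repsD:
  assumes "is_reps val a b R"
  shows "finite R" "R \<subseteq> pp val a" "\<And>x. x \<in> pp val a \<Longrightarrow> \<exists>!r\<in>R. x - r \<in> pp val b"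
  using assms by (auto simp: is_reps_def)

lemma reps_ne: "is_reps val a b R \<Longrightarrow> R \<noteq> {}"
  unfolding is_reps_def using pp0 by blast

lemma reps_uniq: "is_reps val a b R \<Longrightarrow> x \<in> pp val a \<Longrightarrow> r \<in> R \<Longrightarrow> r' \<in> R \<Longrightarrow>
   x - r \<in> pp val b \<Longrightarrow> x - r' \<in> pp val b \<Longrightarrow> r = r'"
  unfolding is_reps_def by blast

lemma reps_eq: "is_reps val a b R \<Longrightarrow> r \<in> R \<Longrightarrow> r' \<in> R \<Longrightarrow> r - r' \<in> pp val b \<Longrightarrow> r = r'"
  using reps_uniq[of a b R r r r'] by (auto simp: is_reps_def)

lemma reps_scale:
  assumes R: "is_reps val a b R" and c: "c \<noteq> 0"
  shows "is_reps val (val c + a) (val c + b) ((*) c ` R)"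
  unfolding is_reps_def
proof (intro conjI ballI)
  show "finite ((*) c ` R)" using repsD[OF R] by simp
  show "(*) c ` R \<subseteq> pp val (val c + a)" using repsD(2)[OF R] pp_cmult[OF _ c] by auto
  fix x assume x: "x \<in> pp val (val c + a)"
  have xc: "x / c \<in> pp val a" using pp_divide[OF x c] by simp
  obtain r where r: "r \<in> R" "x / c - r \<in> pp val b" using repsD(3)[OF R xc] by blast
  have "c * (x / c - r) \<in> pp val (val c + b)" using pp_cmult[OF r(2) c] .
  hence e: "x - c * r \<in> pp val (val c + b)" using c by (simp add: algebra_simps)
  show "\<exists>!y\<in>(*) c ` R. x - y \<in> pp val (val c + b)"
  proof (rule ex1I[of _ "c * r"])
    show "c * r \<in> (*) c ` R \<and> x - c * r \<in> pp val (val c + b)" using r e by auto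
    fix y assume y: "y \<in> (*) c ` R \<and> x - y \<in> pp val (val c + b)"
    then obtain r' where r': "r' \<in> R" "y = c * r'" by auto
    have "(x - c * r') / c \<in> pp val b" using pp_divide[OF _ c, of "x - c*r'" "val c + b"] y r' by simp
    hence "x / c - r' \<in> pp val b" using c by (simp add: field_simps)
    hence "r' = r" using reps_uniq[OF R xc r'(1) r(1)] r by blast
    thus "y = c * r" using r' by simp
  qed
qed

lemma reps_unit:
  assumes R: "is_reps val a b R" and c: "c \<in> units_o val"
  shows "is_reps val a b ((*) c ` R)"
  using reps_scale[OF R unit_nz[OF c]] unit_val[OF c] by simp

lemma reps_translate:
  assumes R: "is_reps val a b R" and t: "t \<in> pp val a"
  shows "is_reps val a b ((+) t ` R)"
  unfolding is_reps_def
proof (intro conjI ballI)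
  show "finite ((+) t ` R)" using repsD[OF R] by simp
  show "(+) t ` R \<subseteq> pp val a" using repsD(2)[OF R] pp_add[OF t] by auto
  fix x assume x: "x \<in> pp val a"
  have xt: "x - t \<in> pp val a" using pp_diff[OF x t] .
  obtain r where r: "r \<in> R" "x - t - r \<in> pp val b" using repsD(3)[OF R xt] by blast
  show "\<exists>!y\<in>(+) t ` R. x - y \<in> pp val b"
  proof (rule ex1I[of _ "t + r"])
    show "t + r \<in> (+) t ` R \<and> x - (t + r) \<in> pp val b" using r by (auto simp: algebra_simps)
    fix y assume y: "y \<in> (+) t ` R \<and> x - y \<in> pp val b"
    then obtain r' where r': "r' \<in> R" "y = t + r'" by auto
    have "x - t - r' \<in> pp val b" using y r' by (simp add: algebra_simps)
    hence "r' = r" using reps_uniq[OF R xt r'(1) r(1)] r by blast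
    thus "y = t + r" using r' by simp
  qed
qed

lemma reps_restrict:
  assumes R: "is_reps val a c R" and ab: "a \<le> b" and bc: "b \<le> c"
  shows "is_reps val b c {x\<in>R. x \<in> pp val b}"
  unfolding is_reps_def
proof (intro conjI ballI)
  show "finite {x\<in>R. x \<in> pp val b}" using repsD[OF R] by simp
  show "{x\<in>R. x \<in> pp val b} \<subseteq> pp val b" by auto
  fix x assume x: "x \<in> pp val b"
  have xa: "x \<in> pp val a" using pp_mono[OF ab x] .
  obtain r where r: "r \<in> R" "x - r \<in> pp val c" using repsD(3)[OF R xa] by blast
  have xr: "x - r \<in> pp val b" using pp_mono[OF bc r(2)] .
  have rb: "r \<in> pp val b" using pp_diff[OF x xr] by simp
  show "\<exists>!y\<in>{x\<in>R. x \<in> pp val b}. x - y \<in> pp val c"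
    using r rb reps_uniq[OF R xa] by blast
qed

lemma reps_trans:
  assumes R1: "is_reps val a b R1" and R2: "is_reps val b c R2" and ab: "a \<le> b" and bc: "b \<le> c"
  shows "is_reps val a c ((\<lambda>(r,s). r + s) ` (R1 \<times> R2)) \<and> inj_on (\<lambda>(r,s). r + s) (R1 \<times> R2)"
proof -
  have key: "r = r' \<and> s = s'" if x: "x \<in> pp val a" and r: "r \<in> R1" "s \<in> R2" "r' \<in> R1" "s' \<in> R2"
     and e1: "x - (r + s) \<in> pp val c" and e2: "x - (r' + s') \<in> pp val c" for x r s r' s'
  proof -
    have sb: "s \<in> pp val b" "s' \<in> pp val b" using repsD(2)[OF R2] r by auto
    have "x - r \<in> pp val b" using pp_add[OF pp_mono[OF bc e1] sb(1)] by (simp add: algebra_simps)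
    moreover have "x - r' \<in> pp val b" using pp_add[OF pp_mono[OF bc e2] sb(2)] by (simp add: algebra_simps)
    ultimately have rr: "r = r'" using reps_uniq[OF R1 x r(1) r(3)] by blast
    have "s - s' \<in> pp val c" using pp_diff[OF e2 e1] rr by (simp add: algebra_simps)
    hence "s = s'" using reps_eq[OF R2 r(2) r(4)] by blast
    with rr show ?thesis by simp
  qed
  have inj: "inj_on (\<lambda>(r,s). r + s) (R1 \<times> R2)"
  proof (rule inj_onI, clarify)
    fix r s r' s' assume h: "r \<in> R1" "s \<in> R2" "r' \<in> R1" "s' \<in> R2" "r + s = r' + s'"
    have "r \<in> pp val a" "s \<in> pp val a" using h repsD(2)[OF R1] repsD(2)[OF R2] pp_mono[OF ab] by auto
    hence "r + s \<in> pp val a" by (rule pp_add)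
    thus "r = r' \<and> s = s'" using key[of "r + s" r s r' s'] h by simp
  qed
  have reps: "is_reps val a c ((\<lambda>(r,s). r + s) ` (R1 \<times> R2))"
    unfolding is_reps_def
  proof (intro conjI ballI)
    show "finite ((\<lambda>(r,s). r + s) ` (R1 \<times> R2))" using repsD(1)[OF R1] repsD(1)[OF R2] by simp
    show "(\<lambda>(r,s). r + s) ` (R1 \<times> R2) \<subseteq> pp val a"
    proof clarify
      fix r s assume h: "r \<in> R1" "s \<in> R2"
      have "r \<in> pp val a" "s \<in> pp val a" using h repsD(2)[OF R1] repsD(2)[OF R2] pp_mono[OF ab] by auto
      thus "r + s \<in> pp val a" by (rule pp_add)
    qed
    fix x assume x: "x \<in> pp val a"
    obtain r where r: "r \<in> R1" "x - r \<in> pp val b" using repsD(3)[OF R1 x] by blast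
    obtain s where s: "s \<in> R2" "x - r - s \<in> pp val c" using repsD(3)[OF R2 r(2)] by blast
    show "\<exists>!y\<in>(\<lambda>(r,s). r + s) ` (R1 \<times> R2). x - y \<in> pp val c"
    proof (rule ex1I[of _ "r + s"])
      show "r + s \<in> (\<lambda>(r,s). r + s) ` (R1 \<times> R2) \<and> x - (r + s) \<in> pp val c"
        using r s by (force simp: algebra_simps)
      fix y assume "y \<in> (\<lambda>(r,s). r + s) ` (R1 \<times> R2) \<and> x - y \<in> pp val c"
      then obtain r' s' where "r' \<in> R1" "s' \<in> R2" "y = r' + s'" "x - (r' + s') \<in> pp val c" by auto
      thus "y = r + s" using key[of x r' s' r s] x r s by (simp add: algebra_simps)
    qed
  qed
  show ?thesis using inj reps by simp
qed

lemma reps_exist_step: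
  assumes "is_reps val a b R" "a \<le> b"
  shows "\<exists>R. is_reps val a (b + 1) R"
proof -
  obtain R0 where R0: "is_reps val 0 1 R0" using resfin by blast
  obtain c where c: "c \<noteq> 0" "val c = b" using vsurj by blast
  have "is_reps val b (b + 1) ((*) c ` R0)" using reps_scale[OF R0 c(1)] c(2) by simp
  from reps_trans[OF assms(1) this assms(2)] show ?thesis by auto
qed

lemma reps_exist: "a \<le> b \<Longrightarrow> \<exists>R. is_reps val a b R"
proof (induction b rule: int_ge_induct)
  case base
  have "is_reps val a a {0}" by (auto simp: is_reps_def)
  thus ?case by blast
next
  case (step i)
  then obtain R where "is_reps val a i R" by blast
  thus ?case using reps_exist_step step by blast
qed

definition cinv :: "int \<Rightarrow> int \<Rightarrow> ('a \<Rightarrow> 'b) \<Rightarrow> bool" where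
  "cinv a b g \<longleftrightarrow> (\<forall>x\<in>pp val a. \<forall>y\<in>pp val b. g (x + y) = g x)"

lemma sum_reps_indep:
  fixes g :: "'a \<Rightarrow> 'b::comm_monoid_add"
  assumes R: "is_reps val a b R" and R': "is_reps val a b R'" and g: "cinv a b g"
  shows "sum g R = sum g R'"
proof -
  define \<phi> where "\<phi> r = (THE r'. r' \<in> R' \<and> r - r' \<in> pp val b)" for r
  have \<phi>: "\<phi> r \<in> R' \<and> r - \<phi> r \<in> pp val b" if "r \<in> R" for r
  proof -
    have "r \<in> pp val a" using repsD(2)[OF R] that by auto
    from repsD(3)[OF R' this] have "\<exists>!r'. r' \<in> R' \<and> r - r' \<in> pp val b" by blast
    thus ?thesis unfolding \<phi>_def by (rule theI')
  qed
  have bij: "bij_betw \<phi> R R'"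
  proof (rule bij_betw_imageI)
    show "inj_on \<phi> R"
    proof (rule inj_onI)
      fix r1 r2 assume h: "r1 \<in> R" "r2 \<in> R" "\<phi> r1 = \<phi> r2"
      have p: "\<phi> r1 \<in> pp val a" using \<phi>[OF h(1)] repsD(2)[OF R'] by auto
      have "\<phi> r1 - r1 \<in> pp val b" "\<phi> r1 - r2 \<in> pp val b"
        using \<phi>[OF h(1)] \<phi>[OF h(2)] h(3) pp_swap by metis+
      thus "r1 = r2" using reps_uniq[OF R p h(1) h(2)] by blast
    qed
    show "\<phi> ` R = R'"
    proof
      show "\<phi> ` R \<subseteq> R'" using \<phi> by auto
      show "R' \<subseteq> \<phi> ` R"
      proof
        fix r' assume r': "r' \<in> R'"
        have p: "r' \<in> pp val a" using r' repsD(2)[OF R'] by auto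
        obtain r where r: "r \<in> R" "r' - r \<in> pp val b" using repsD(3)[OF R p] by blast
        have "r - r' \<in> pp val b" using pp_neg[OF r(2)] by simp
        have "r \<in> pp val a" using r repsD(2)[OF R] by auto
        hence "\<phi> r = r'" using reps_uniq[OF R' _ _ r'] \<phi>[OF r(1)] \<open>r - r' \<in> pp val b\<close> by blast
        thus "r' \<in> \<phi> ` R" using r by blast
      qed
    qed
  qed
  have eq: "g r = g (\<phi> r)" if "r \<in> R" for r
  proof -
    have "\<phi> r \<in> pp val a" using \<phi>[OF that] repsD(2)[OF R'] by auto
    hence "g (\<phi> r + (r - \<phi> r)) = g (\<phi> r)" using g \<phi>[OF that] unfolding cinv_def by blast
    thus ?thesis by simp
  qed
  have "sum g R' = sum (g \<circ> \<phi>) R" using sum.reindex_bij_betw[OF bij, of g] by simp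
  also have "\<dots> = sum g R" using eq by (auto intro: sum.cong)
  finally show ?thesis by simp
qed

lemma sum_translate:
  fixes g :: "'a \<Rightarrow> 'b::comm_monoid_add"
  assumes R: "is_reps val a b R" and t: "t \<in> pp val a" and g: "cinv a b g"
  shows "(\<Sum>r\<in>R. g (t + r)) = sum g R"
proof -
  have "(\<Sum>r\<in>R. g (t + r)) = sum g ((+) t ` R)"
    by (subst sum.reindex) (auto simp: inj_on_def)
  also have "\<dots> = sum g R" using sum_reps_indep[OF reps_translate[OF R t] R g] .
  finally show ?thesis .
qed

lemma sum_scale:
  fixes g :: "'a \<Rightarrow> 'b::comm_monoid_add"
  assumes R: "is_reps val a b R" and c: "c \<in> units_o val" and g: "cinv a b g"
  shows "(\<Sum>r\<in>R. g (c * r)) = sum g R"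
proof -
  have "(\<Sum>r\<in>R. g (c * r)) = sum g ((*) c ` R)"
    using unit_nz[OF c] by (subst sum.reindex) (auto simp: inj_on_def)
  also have "\<dots> = sum g R" using sum_reps_indep[OF reps_unit[OF R c] R g] .
  finally show ?thesis .
qed

lemma sum_count:
  fixes g :: "'a \<Rightarrow> 'b::comm_monoid_add"
  assumes R: "is_reps val a n R" and T: "is_reps val a 0 T" and S: "is_reps val 0 n S"
    and a: "a \<le> 0" and n: "0 \<le> n" and g: "cinv a 0 g"
  shows "sum g R = (\<Sum>t\<in>T. \<Sum>s\<in>S. g t)"
proof -
  note tr = reps_trans[OF T S a n]
  have gn: "cinv a n g" using g pp_mono[OF n] unfolding cinv_def by blast
  have "sum g R = sum g ((\<lambda>(r,s). r + s) ` (T \<times> S))" using sum_reps_indep[OF R conjunct1[OF tr] gn] .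
  also have "\<dots> = (\<Sum>(t,s)\<in>T \<times> S. g (t + s))" using sum.reindex[OF conjunct2[OF tr], of g]
    by (simp add: case_prod_unfold)
  also have "\<dots> = (\<Sum>t\<in>T. \<Sum>s\<in>S. g (t + s))" by (rule sum.cartesian_product[symmetric])
  also have "\<dots> = (\<Sum>t\<in>T. \<Sum>s\<in>S. g t)"
    using repsD(2)[OF T] repsD(2)[OF S] g unfolding cinv_def by (intro sum.cong refl) blast
  finally show ?thesis .
qed

end


locale setting = vf val + module sc
  for val :: "'a::field_char_0 \<Rightarrow> int" and sc :: "complex \<Rightarrow> 'v::ab_group_add \<Rightarrow> 'v" +
  fixes \<psi> :: "'a \<Rightarrow> complex" and \<pi> :: "'a^4^4 \<Rightarrow> 'v \<Rightarrow> 'v"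
  assumes CH: "conductor_o_char val \<psi>" and SM: "smooth_rep val sc \<pi>"
begin

abbreviation Z where "Z x \<equiv> \<pi> (zmat x)"
abbreviation D where "D c \<equiv> \<pi> (dmat c)"

lemma psi_add: "\<psi> (x + y) = \<psi> x * \<psi> y" using CH unfolding conductor_o_char_def by blast
lemma psi_nz: "\<psi> x \<noteq> 0" using CH unfolding conductor_o_char_def by blast
lemma psi_o: "x \<in> pp val 0 \<Longrightarrow> \<psi> x = 1" using CH unfolding conductor_o_char_def by blast
lemma psi_nontriv: "\<exists>t\<in>pp val (-1). \<psi> t \<noteq> 1" using CH unfolding conductor_o_char_def by blast
lemma psi_neg: "\<psi> (- x) * \<psi> x = 1"
  using psi_add[of "-x" x] psi_o[of 0] by simp
lemma psi_diff: "\<psi> (x - y) = \<psi> x * \<psi> (- y)"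
  using psi_add[of x "-y"] by simp

lemma lin: "g \<in> GSp4 \<Longrightarrow> module_hom sc sc (\<pi> g)"
  using SM unfolding smooth_rep_def by (simp add: module_hom_iff_linear)

lemma pi_add: "g \<in> GSp4 \<Longrightarrow> \<pi> g (a + b) = \<pi> g a + \<pi> g b" using module_hom.add[OF lin] .
lemma pi_diff: "g \<in> GSp4 \<Longrightarrow> \<pi> g (a - b) = \<pi> g a - \<pi> g b" using module_hom.diff[OF lin] .
lemma pi_scale: "g \<in> GSp4 \<Longrightarrow> \<pi> g (sc r a) = sc r (\<pi> g a)" using module_hom.scale[OF lin] .
lemma pi_zero: "g \<in> GSp4 \<Longrightarrow> \<pi> g 0 = 0" using module_hom.zero[OF lin] .
lemma pi_sum: "g \<in> GSp4 \<Longrightarrow> \<pi> g (sum f A) = (\<Sum>a\<in>A. \<pi> g (f a))" using module_hom.sum[OF lin] .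

lemma pi_mult: "g \<in> GSp4 \<Longrightarrow> h \<in> GSp4 \<Longrightarrow> \<pi> g (\<pi> h v) = \<pi> (g ** h) v"
  using SM unfolding smooth_rep_def by simp
lemma pi_one: "\<pi> (mat 1) v = v"
  using SM unfolding smooth_rep_def by simp

lemma Z_add: "Z x (Z y v) = Z (x + y) v"
  by (simp add: pi_mult zmat_GSp zmat_mult)
lemma Z0: "Z 0 v = v" by (simp add: zmat0 pi_one)
lemma D_mult: "c \<noteq> 0 \<Longrightarrow> d \<noteq> 0 \<Longrightarrow> D c (D d v) = D (c * d) v"
  by (simp add: pi_mult dmat_GSp dmat_mult)
lemma D1: "D 1 v = v" by (simp add: dmat1 pi_one)
lemma ZD: "c \<noteq> 0 \<Longrightarrow> Z y (D c v) = D c (Z (c * y) v)"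
  by (simp add: pi_mult dmat_GSp zmat_GSp zd_comm)

lemma Z_lin: "Z x (a + b) = Z x a + Z x b" "Z x (a - b) = Z x a - Z x b" "Z x (sc r a) = sc r (Z x a)"
  "Z x 0 = 0" "Z x (sum f A) = (\<Sum>i\<in>A. Z x (f i))"
  by (simp_all add: pi_add pi_diff pi_scale pi_zero pi_sum zmat_GSp)
lemma D_lin: "c \<noteq> 0 \<Longrightarrow> D c (a + b) = D c a + D c b"  "c \<noteq> 0 \<Longrightarrow> D c (a - b) = D c a - D c b"
  "c \<noteq> 0 \<Longrightarrow> D c (sc r a) = sc r (D c a)"
  "c \<noteq> 0 \<Longrightarrow> D c 0 = 0" "c \<noteq> 0 \<Longrightarrow> D c (sum f A) = (\<Sum>i\<in>A. D c (f i))"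
  by (simp_all add: pi_add pi_diff pi_scale pi_zero pi_sum dmat_GSp)

lemma smooth: "\<exists>n\<ge>1. (\<forall>y\<in>pp val n. Z y v = v) \<and> (\<forall>e. e - 1 \<in> pp val n \<longrightarrow> D e v = v)"
proof -
  obtain n where n: "n \<ge> 1" "\<forall>g\<in>GSp4. (\<forall>i j. (g - mat 1) $ i $ j \<in> pp val n) \<longrightarrow> \<pi> g v = v"
    using SM unfolding smooth_rep_def by blast
  have "Z y v = v" if "y \<in> pp val n" for y
  proof -
    have "\<forall>i j. (zmat y - mat 1) $ i $ j \<in> pp val n" unfolding zmat_sub using that by auto
    thus ?thesis using n(2) zmat_GSp[of y] by blast
  qed
  moreover have "D e v = v" if "e - 1 \<in> pp val n" for e
  proof -
    have "e \<noteq> 0"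
    proof
      assume "e = 0" hence "1 \<in> pp val 1" using that pp_mono[of 1 n "-1"] n(1) by simp
      thus False using one_npp1 by simp
    qed
    moreover have "\<forall>i j. (dmat e - mat 1) $ i $ j \<in> pp val n" unfolding dmat_sub using that by auto
    ultimately show ?thesis using n(2) dmat_GSp[of e] by blast
  qed
  ultimately show ?thesis using n(1) by blast
qed

abbreviation N where "N \<equiv> ZJ_kernel sc \<pi> \<psi>"

lemma N_span: "N = span {Z x v - sc (\<psi> x) v | x v. True}"
  by (simp add: ZJ_kernel_def)
lemma N_gen: "Z x v - sc (\<psi> x) v \<in> N"
  unfolding N_span by (rule span_base) blast
lemma N_add: "a \<in> N \<Longrightarrow> b \<in> N \<Longrightarrow> a + b \<in> N" unfolding N_span by (rule span_add)
lemma N_diff: "a \<in> N \<Longrightarrow> b \<in> N \<Longrightarrow> a - b \<in> N" unfolding N_span by (rule span_diff)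
lemma N_scale: "a \<in> N \<Longrightarrow> sc r a \<in> N" unfolding N_span by (rule span_scale)
lemma N_zero: "0 \<in> N" unfolding N_span by (rule span_zero)
lemma N_sum: "(\<And>i. i \<in> A \<Longrightarrow> f i \<in> N) \<Longrightarrow> sum f A \<in> N" unfolding N_span by (rule span_sum)

lemma proj_eq: "ZJ_proj sc \<pi> \<psi> v = ZJ_proj sc \<pi> \<psi> v' \<longleftrightarrow> v - v' \<in> N"
proof
  assume h: "ZJ_proj sc \<pi> \<psi> v = ZJ_proj sc \<pi> \<psi> v'"
  have "v \<in> ZJ_proj sc \<pi> \<psi> v" unfolding ZJ_proj_def using N_zero by force
  then obtain u where "u \<in> N" "v = v' + u" using h unfolding ZJ_proj_def by auto
  thus "v - v' \<in> N" by simp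
next
  assume h: "v - v' \<in> N"
  show "ZJ_proj sc \<pi> \<psi> v = ZJ_proj sc \<pi> \<psi> v'"
    unfolding ZJ_proj_def
  proof safe
    fix u assume "u \<in> N"
    thus "\<exists>u'. v + u = v' + u' \<and> u' \<in> N" using N_add[OF h] by (intro exI[of _ "(v - v') + u"]) auto
  next
    fix u assume "u \<in> N"
    thus "\<exists>u'. v' + u = v + u' \<and> u' \<in> N" using N_diff[OF _ h] by (intro exI[of _ "u - (v - v')"]) auto
  qed
qed

lemma char_sum:
  assumes A: "is_reps val j m A" and y: "y \<in> pp val (-m)"
  shows "(\<Sum>a\<in>A. \<psi> (a * y)) = (if y \<in> pp val (-j) then of_nat (card A) else 0)"
proof (cases "y \<in> pp val (-j)")
  case True
  have "\<psi> (a * y) = 1" if "a \<in> A" for a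
    using pp_mult[of a j y "-j"] repsD(2)[OF A] that True psi_o by auto
  thus ?thesis using True by simp
next
  case False
  then have yv: "y \<noteq> 0" "val y < -j" using not_pp_val by auto
  obtain t where t: "t \<in> pp val (-1)" "\<psi> t \<noteq> 1" using psi_nontriv by blast
  have t0: "t \<noteq> 0" using t psi_o[of 0] by auto
  have "t / y \<in> pp val (-1 - val y)" using pp_divide[OF t(1) yv(1)] .
  hence a0: "t / y \<in> pp val j" using yv(2) pp_mono[of j "-1 - val y"] by simp
  have ci: "cinv j m (\<lambda>a. \<psi> (a * y))"
    unfolding cinv_def
  proof (intro ballI)
    fix a e assume "a \<in> pp val j" "e \<in> pp val m"
    have "e * y \<in> pp val 0" using pp_mult[OF \<open>e \<in> pp val m\<close> y] by simp
    thus "\<psi> ((a + e) * y) = \<psi> (a * y)" by (simp add: distrib_right psi_add psi_o)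
  qed
  have "(\<Sum>a\<in>A. \<psi> ((t / y + a) * y)) = (\<Sum>a\<in>A. \<psi> (a * y))"
    using sum_translate[OF A a0 ci] .
  moreover have "(\<Sum>a\<in>A. \<psi> ((t / y + a) * y)) = \<psi> t * (\<Sum>a\<in>A. \<psi> (a * y))"
    using yv(1) by (simp add: distrib_right psi_add sum_distrib_left)
  ultimately have "(\<psi> t - 1) * (\<Sum>a\<in>A. \<psi> (a * y)) = 0" by (simp add: algebra_simps)
  thus ?thesis using False t(2) by simp
qed

lemma haar_core:
  assumes f: "cinv (-1) 0 f" and T: "is_reps val (-1) 0 T" and n: "0 \<le> n"
    and R: "is_reps val (-1) n R" and S: "is_reps val 0 n S"
  shows "(\<Sum>r\<in>R. sc (1 / of_nat (card S)) (f r)) = sum f T"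
proof -
  have cS: "card S \<noteq> 0" using repsD(1)[OF S] reps_ne[OF S] by simp
  have "sum f R = (\<Sum>t\<in>T. \<Sum>s\<in>S. f t)" using sum_count[OF R T S _ n f] by simp
  also have "\<dots> = (\<Sum>t\<in>T. sc (of_nat (card S)) (f t))" by (simp add: sum_constant_scale)
  also have "\<dots> = sc (of_nat (card S)) (sum f T)" by (simp add: scale_sum_right)
  finally have "(\<Sum>r\<in>R. sc (1 / of_nat (card S)) (f r)) = sc (1 / of_nat (card S)) (sc (of_nat (card S)) (sum f T))"
    by (simp add: scale_sum_right[symmetric])
  thus ?thesis using cS by simp
qed

lemma haar_eval:
  assumes f: "cinv (-1) 0 f" and T: "is_reps val (-1) 0 T"
  shows "haar_int val sc (-1) f = sum f T"
  unfolding haar_int_def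
proof (rule the_equality)
  show "\<exists>n. max 0 (- 1) \<le> n \<and> (\<forall>x\<in>pp val (- 1). \<forall>y\<in>pp val n. f (x + y) = f x) \<and>
        (\<forall>R S. is_reps val (- 1) n R \<longrightarrow> is_reps val 0 n S \<longrightarrow> sum f T = (\<Sum>r\<in>R. sc (1 / of_nat (card S)) (f r)))"
  proof (intro exI[of _ 0] conjI allI impI)
    show "\<forall>x\<in>pp val (- 1). \<forall>y\<in>pp val 0. f (x + y) = f x" using f unfolding cinv_def by blast
    fix R S assume "is_reps val (- 1) 0 R" "is_reps val 0 0 S"
    thus "sum f T = (\<Sum>r\<in>R. sc (1 / of_nat (card S)) (f r))" using haar_core[OF f T, of 0 R S] by simp
  qed simp
next
  fix I assume "\<exists>n. max 0 (- 1) \<le> n \<and> (\<forall>x\<in>pp val (- 1). \<forall>y\<in>pp val n. f (x + y) = f x) \<and>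
        (\<forall>R S. is_reps val (- 1) n R \<longrightarrow> is_reps val 0 n S \<longrightarrow> I = (\<Sum>r\<in>R. sc (1 / of_nat (card S)) (f r)))"
  then obtain n where n: "0 \<le> n" and I: "\<forall>R S. is_reps val (- 1) n R \<longrightarrow> is_reps val 0 n S \<longrightarrow> I = (\<Sum>r\<in>R. sc (1 / of_nat (card S)) (f r))"
    by auto
  obtain R where R: "is_reps val (-1) n R" using reps_exist[of "-1" n] n by auto
  obtain S where S: "is_reps val 0 n S" using reps_exist[of 0 n] n by auto
  show "I = sum f T" using I R S haar_core[OF f T n R S] by simp
qed

end


context setting begin

lemma psi_pp: "0 \<le> n \<Longrightarrow> e \<in> pp val n \<Longrightarrow> \<psi> e = 1"
  using psi_o pp_mono[of 0 n e] by simp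

lemma cinv_gen:
  assumes w: "\<forall>e\<in>pp val n. Z e w = w" and n: "0 \<le> n"
    and l: "\<And>x e. x \<in> pp val a \<Longrightarrow> e \<in> pp val n \<Longrightarrow> l (x + e) - l x \<in> pp val 0"
  shows "cinv a n (\<lambda>x. sc (\<psi> (l x)) (F (Z x w)))"
  unfolding cinv_def
proof (intro ballI)
  fix x e assume x: "x \<in> pp val a" and e: "e \<in> pp val n"
  have "Z (x + e) w = Z x w" using w e Z_add[of x e w] by simp
  moreover have "\<psi> (l (x + e)) = \<psi> (l x)"
    using psi_add[of "l x" "l (x + e) - l x"] psi_o[OF l[OF x e]] by simp
  ultimately show "sc (\<psi> (l (x + e))) (F (Z (x + e) w)) = sc (\<psi> (l x)) (F (Z x w))" by simp
qed

definition jac :: "'v \<Rightarrow> bool" where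
  "jac u \<longleftrightarrow> (\<exists>m0 n0. 0 \<le> n0 \<and> (\<forall>m n X. m0 \<le> m \<longrightarrow> n0 \<le> n \<longrightarrow> is_reps val (-m) n X \<longrightarrow>
      (\<Sum>x\<in>X. sc (\<psi> (-x)) (Z x u)) = 0))"

lemma jac_gen: "jac (Z y v - sc (\<psi> y) v)"
proof -
  obtain n1 where n1: "n1 \<ge> 1" "\<forall>e\<in>pp val n1. Z e v = v" using smooth[of v] by blast
  define m0 where "m0 = (if y = 0 then 0 else - val y)"
  have "(\<Sum>x\<in>X. sc (\<psi> (-x)) (Z x (Z y v - sc (\<psi> y) v))) = 0"
    if m: "m0 \<le> m" and n: "n1 \<le> n" and X: "is_reps val (-m) n X" for m n X
  proof -
    have y: "y \<in> pp val (-m)" using m by (cases "y = 0") (auto simp: m0_def pp_def)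
    define k where "k x = sc (\<psi> (-(x - y))) (id (Z x v))" for x
    have ci: "cinv (-m) n k" unfolding k_def
    proof (rule cinv_gen)
      show "\<forall>e\<in>pp val n. Z e v = v" using n1(2) pp_mono[OF n] by blast
      show "0 \<le> n" using n n1 by simp
      fix x e assume "e \<in> pp val n"
      hence "- e \<in> pp val 0" using pp_mono[of 0 n] n n1 by simp
      thus "- (x + e - y) - - (x - y) \<in> pp val 0" by (simp add: algebra_simps)
    qed
    have "(\<Sum>x\<in>X. k (y + x)) = sum k X" using sum_translate[OF X y ci] .
    moreover have "k (y + x) = sc (\<psi> (-x)) (Z x (Z y v))" for x
      by (simp add: k_def Z_add add.commute)
    moreover have "k x = sc (\<psi> (-x)) (sc (\<psi> y) (Z x v))" for x
      by (simp add: k_def psi_diff mult.commute)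
    ultimately have "(\<Sum>x\<in>X. sc (\<psi> (-x)) (Z x (Z y v))) = (\<Sum>x\<in>X. sc (\<psi> (-x)) (sc (\<psi> y) (Z x v)))"
      by simp
    thus ?thesis by (simp add: Z_lin scale_right_diff_distrib sum_subtractf)
  qed
  thus ?thesis unfolding jac_def using n1(1) by (intro exI[of _ m0] exI[of _ n1]) auto
qed

lemma jac_N: "u \<in> N \<Longrightarrow> jac u"
proof -
  assume u: "u \<in> N"
  have sub: "subspace (Collect jac)"
  proof (rule subspaceI)
    show "0 \<in> Collect jac" unfolding jac_def by (auto simp: Z_lin intro!: exI[of _ 0])
  next
    fix a b assume "a \<in> Collect jac" "b \<in> Collect jac"
    then obtain ma na mb nb where a: "0 \<le> na" "\<forall>m n X. ma \<le> m \<longrightarrow> na \<le> n \<longrightarrow> is_reps val (-m) n X \<longrightarrow>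
      (\<Sum>x\<in>X. sc (\<psi> (-x)) (Z x a)) = 0" and b: "0 \<le> nb" "\<forall>m n X. mb \<le> m \<longrightarrow> nb \<le> n \<longrightarrow> is_reps val (-m) n X \<longrightarrow>
      (\<Sum>x\<in>X. sc (\<psi> (-x)) (Z x b)) = 0" unfolding jac_def by auto
    show "a + b \<in> Collect jac" unfolding jac_def mem_Collect_eq
      apply (rule exI[of _ "max ma mb"], rule exI[of _ "max na nb"])
      using a b by (auto simp: Z_lin scale_right_distrib sum.distrib)
  next
    fix c a assume "a \<in> Collect jac"
    then obtain ma na where a: "0 \<le> na" "\<forall>m n X. ma \<le> m \<longrightarrow> na \<le> n \<longrightarrow> is_reps val (-m) n X \<longrightarrow>
      (\<Sum>x\<in>X. sc (\<psi> (-x)) (Z x a)) = 0" unfolding jac_def by auto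
    show "sc c a \<in> Collect jac" unfolding jac_def mem_Collect_eq
    proof (rule exI[of _ ma], rule exI[of _ na], intro conjI allI impI)
      show "0 \<le> na" using a by simp
      fix m n X assume "ma \<le> m" "na \<le> n" "is_reps val (-m) n X"
      hence "sc c (\<Sum>x\<in>X. sc (\<psi> (-x)) (Z x a)) = 0" using a(2) by simp
      thus "(\<Sum>x\<in>X. sc (\<psi> (-x)) (Z x (sc c a))) = 0"
        by (simp add: Z_lin scale_sum_right mult.commute)
    qed
  qed
  show ?thesis using span_induct[of u _ jac] u sub jac_gen unfolding N_span by blast
qed

lemma sum_if_split:
  fixes f :: "'b \<Rightarrow> 'c::ab_group_add"
  assumes "finite A"
  shows "(\<Sum>a\<in>A. if P a then 0 else f a) = sum f A - sum f {a\<in>A. P a}"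
proof -
  have "sum f {a\<in>A. P a} = (\<Sum>a\<in>A. if P a then f a else 0)" using sum.inter_filter[OF assms] .
  moreover have "(\<Sum>a\<in>A. if P a then 0 else f a) = (\<Sum>a\<in>A. f a - (if P a then f a else 0))"
    by (rule sum.cong) auto
  ultimately show ?thesis by (simp add: sum_subtractf)
qed

lemma sum_if_scale:
  "(\<Sum>x\<in>A. sc (if P x then k else 0) (w x)) = sc k (\<Sum>x\<in>A. if P x then w x else 0)"
  unfolding scale_sum_right by (rule sum.cong) auto

lemma uniq:
  assumes u: "u \<in> N" and Zu: "\<forall>y\<in>pp val 0. Z y u = u" and Du: "\<forall>c\<in>units_o val. D c u = u"
    and T1: "is_reps val (-1) 0 T1" and s: "(\<Sum>t\<in>T1. Z t u) = 0"
  shows "u = 0"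
proof -
  obtain m0 n0 where n0: "0 \<le> n0" and J: "\<And>m n X. m0 \<le> m \<Longrightarrow> n0 \<le> n \<Longrightarrow> is_reps val (-m) n X \<Longrightarrow>
      (\<Sum>x\<in>X. sc (\<psi> (-x)) (Z x u)) = 0" using jac_N[OF u] unfolding jac_def by blast
  define m where "m = max m0 1"
  have m1: "1 \<le> m" and mm0: "m0 \<le> m" by (auto simp: m_def)
  obtain X where X: "is_reps val (-m) n0 X" using reps_exist[of "-m" n0] m1 n0 by auto
  obtain T where T: "is_reps val (-m) 0 T" using reps_exist[of "-m" 0] m1 by auto
  obtain S0 where S0: "is_reps val 0 n0 S0" using reps_exist[of 0 n0] n0 by auto
  obtain A where A: "is_reps val 0 m A" using reps_exist[of 0 m] m1 by auto
  define g where "g x = sc (\<psi> (-x)) (id (Z x u))" for x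
  have cg: "cinv (-m) 0 g" unfolding g_def by (rule cinv_gen) (use Zu in auto)
  have "0 = sum g X" using J[OF mm0 order.refl X] by (simp add: g_def)
  also have "\<dots> = (\<Sum>t\<in>T. \<Sum>s\<in>S0. g t)" using sum_count[OF X T S0 _ n0 cg] m1 by simp
  also have "\<dots> = sc (of_nat (card S0)) (sum g T)" by (simp add: sum_constant_scale scale_sum_right)
  finally have "sc (1 / of_nat (card S0)) (sc (of_nat (card S0)) (sum g T)) = 0" by simp
  moreover have "card S0 \<noteq> 0" using repsD(1)[OF S0] reps_ne[OF S0] by simp
  ultimately have sg: "sum g T = 0" by simp
  have Dc: "D c (sum g T) = (\<Sum>x\<in>T. sc (\<psi> (c * (-x))) (Z x u))" if c: "c \<in> units_o val" for c
  proof -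
    have c0: "c \<noteq> 0" using unit_nz[OF c] .
    define k where "k y = sc (\<psi> (- (c * y))) (id (Z y u))" for y
    have ck: "cinv (-m) 0 k" unfolding k_def
    proof (rule cinv_gen)
      show "\<forall>e\<in>pp val 0. Z e u = u" using Zu by blast
      fix x e assume "e \<in> pp val 0"
      hence "c * e \<in> pp val 0" using pp_mult[OF unit_pp0[OF c]] by fastforce
      thus "- (c * (x + e)) - - (c * x) \<in> pp val 0" by (simp add: algebra_simps)
    qed simp
    have "D c (g x) = k (inverse c * x)" for x
    proof -
      have e: "c * (inverse c * x) = x" using c0 by (metis mult.assoc mult.left_neutral right_inverse)
      have "Z (inverse c * x) (D c u) = D c (Z x u)" using ZD[OF c0, of "inverse c * x" u] unfolding e .
      thus ?thesis using Du c c0 by (simp add: g_def k_def D_lin e)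
    qed
    hence "D c (sum g T) = (\<Sum>x\<in>T. k (inverse c * x))" by (simp add: D_lin[OF c0])
    also have "\<dots> = sum k T" using sum_scale[OF T unit_inv[OF c] ck] .
    finally show ?thesis by (simp add: k_def)
  qed
  have "0 = (\<Sum>c\<in>A. if c \<in> pp val 1 then 0 else D c (sum g T))"
  proof (rule sum.neutral[symmetric], rule ballI)
    fix c assume "c \<in> A"
    show "(if c \<in> pp val 1 then 0 else D c (sum g T)) = 0"
    proof (cases "c \<in> pp val 1")
      case False hence "c \<noteq> 0" by (auto simp: pp_def)
      thus ?thesis using False sg D_lin(4) by simp
    qed simp
  qed
  also have "\<dots> = (\<Sum>c\<in>A. \<Sum>x\<in>T. sc (if c \<in> pp val 1 then 0 else \<psi> (c * (-x))) (Z x u))"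
  proof (rule sum.cong[OF refl])
    fix c assume c: "c \<in> A"
    show "(if c \<in> pp val 1 then 0 else D c (sum g T)) = (\<Sum>x\<in>T. sc (if c \<in> pp val 1 then 0 else \<psi> (c * (-x))) (Z x u))"
    proof (cases "c \<in> pp val 1")
      case False
      hence "c \<in> units_o val" using unit_iff repsD(2)[OF A] c by auto
      thus ?thesis using False Dc by simp
    qed simp
  qed
  also have "\<dots> = (\<Sum>x\<in>T. sc (\<Sum>c\<in>A. if c \<in> pp val 1 then 0 else \<psi> (c * (-x))) (Z x u))"
    by (subst sum.swap) (simp add: scale_sum_left)
  also have "\<dots> = (\<Sum>x\<in>T. sc ((if x \<in> pp val 0 then of_nat (card A) else 0) -
                 (if x \<in> pp val (-1) then of_nat (card {c\<in>A. c \<in> pp val 1}) else 0)) (Z x u))"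
  proof (rule sum.cong[OF refl])
    fix x assume x: "x \<in> T"
    have mx: "- x \<in> pp val (-m)" using x repsD(2)[OF T] by auto
    have A1: "is_reps val 1 m {c\<in>A. c \<in> pp val 1}" using reps_restrict[OF A _ m1] by simp
    have "(\<Sum>c\<in>A. if c \<in> pp val 1 then 0 else \<psi> (c * (-x))) =
          (\<Sum>c\<in>A. \<psi> (c * (-x))) - (\<Sum>c\<in>{c\<in>A. c \<in> pp val 1}. \<psi> (c * (-x)))"
      using sum_if_split[OF repsD(1)[OF A]] .
    also have "\<dots> = (if x \<in> pp val 0 then of_nat (card A) else 0) -
                 (if x \<in> pp val (-1) then of_nat (card {c\<in>A. c \<in> pp val 1}) else 0)"
      using char_sum[OF A mx] char_sum[OF A1 mx] by simp
    finally show "sc (\<Sum>c\<in>A. if c \<in> pp val 1 then 0 else \<psi> (c * (-x))) (Z x u) =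
       sc ((if x \<in> pp val 0 then of_nat (card A) else 0) -
                 (if x \<in> pp val (-1) then of_nat (card {c\<in>A. c \<in> pp val 1}) else 0)) (Z x u)" by simp
  qed
  also have "\<dots> = sc (of_nat (card A)) (\<Sum>x\<in>T. if x \<in> pp val 0 then Z x u else 0)
        - sc (of_nat (card {c\<in>A. c \<in> pp val 1})) (\<Sum>x\<in>T. if x \<in> pp val (-1) then Z x u else 0)"
    by (simp add: scale_left_diff_distrib sum_subtractf sum_if_scale)
  also have "(\<Sum>x\<in>T. if x \<in> pp val 0 then Z x u else 0) = u"
  proof -
    have T0: "is_reps val 0 0 {x\<in>T. x \<in> pp val 0}" using reps_restrict[OF T] m1 by simp
    obtain x1 where x1: "x1 \<in> {x\<in>T. x \<in> pp val 0}" using reps_ne[OF T0] by blast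
    have "{x\<in>T. x \<in> pp val 0} = {x1}"
    proof safe
      fix x assume "x \<in> T" "x \<in> pp val 0"
      thus "x = x1" using reps_eq[OF T0, of x x1] x1 pp_diff by auto
    qed (use x1 in auto)
    hence "(\<Sum>x\<in>T. if x \<in> pp val 0 then Z x u else 0) = Z x1 u"
      using sum.inter_filter[OF repsD(1)[OF T], of "\<lambda>x. Z x u" "\<lambda>x. x \<in> pp val 0"] by simp
    thus ?thesis using x1 Zu by simp
  qed
  also have "(\<Sum>x\<in>T. if x \<in> pp val (-1) then Z x u else 0) = 0"
  proof -
    have T': "is_reps val (-1) 0 {x\<in>T. x \<in> pp val (-1)}" using reps_restrict[OF T] m1 by simp
    have cz: "cinv (-1) 0 (\<lambda>x. Z x u)" unfolding cinv_def
    proof (intro ballI)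
      fix x y assume "y \<in> pp val 0"
      thus "Z (x + y) u = Z x u" using Zu Z_add[of x y u] by simp
    qed
    have "(\<Sum>x\<in>T. if x \<in> pp val (-1) then Z x u else 0) = (\<Sum>x\<in>{x\<in>T. x \<in> pp val (-1)}. Z x u)"
      by (rule sum.inter_filter[OF repsD(1)[OF T], symmetric])
    also have "\<dots> = (\<Sum>t\<in>T1. Z t u)" using sum_reps_indep[OF T' T1 cz] .
    finally show ?thesis using s by simp
  qed
  finally have "sc (of_nat (card A)) u = 0" by simp
  hence "sc (1 / of_nat (card A)) (sc (of_nat (card A)) u) = 0" by simp
  moreover have "card A \<noteq> 0" using repsD(1)[OF A] reps_ne[OF A] by simp
  ultimately show ?thesis by simp
qed

end


locale exi = setting val sc \<psi> \<pi>
  for val :: "'a::field_char_0 \<Rightarrow> int" and sc :: "complex \<Rightarrow> 'v::ab_group_add \<Rightarrow> 'v"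
  and \<psi> and \<pi> +
  fixes v0 K X S
  assumes K: "1 \<le> K" and ZK: "\<forall>y\<in>pp val K. Z y v0 = v0" and DK: "\<forall>e. e - 1 \<in> pp val K \<longrightarrow> D e v0 = v0"
    and X: "is_reps val (-K) K X" and S: "is_reps val 0 K S"
begin

definition V where "V c = sc (1 / of_nat (card X)) (\<Sum>x\<in>X. sc (\<psi> (-x)) (D c (Z x v0)))"
definition h where "h c = (if c \<in> pp val 1 then 0 else V c)"
definition vv where "vv = sum h S"

lemma cX: "card X \<noteq> 0" using repsD(1)[OF X] reps_ne[OF X] by simp

lemma E1:
  assumes c: "c \<in> units_o val" and y: "y \<in> pp val (-K)"
  shows "Z y (V c) = sc (\<psi> (c * y)) (V c)"
proof -
  have c0: "c \<noteq> 0" using unit_nz[OF c] .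
  have cy: "c * y \<in> pp val (-K)" using pp_mult[OF unit_pp0[OF c] y] by simp
  define k where "k x = sc (\<psi> (-(x - c * y))) (D c (Z x v0))" for x
  have ck: "cinv (-K) K k" unfolding k_def
  proof (rule cinv_gen)
    show "\<forall>e\<in>pp val K. Z e v0 = v0" using ZK .
    show "0 \<le> K" using K by simp
    fix x e assume "e \<in> pp val K"
    hence "- e \<in> pp val 0" using pp_mono[of 0 K] K by simp
    thus "- (x + e - c * y) - - (x - c * y) \<in> pp val 0" by (simp add: algebra_simps)
  qed
  have "Z y (D c (Z x v0)) = D c (Z (c * y + x) v0)" for x
    using ZD[OF c0, of y "Z x v0"] Z_add by simp
  hence "Z y (V c) = sc (1 / of_nat (card X)) (\<Sum>x\<in>X. k (c * y + x))"
    by (simp add: V_def k_def Z_lin)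
  also have "(\<Sum>x\<in>X. k (c * y + x)) = sum k X" using sum_translate[OF X cy ck] .
  also have "sum k X = sc (\<psi> (c * y)) (\<Sum>x\<in>X. sc (\<psi> (-x)) (D c (Z x v0)))"
    by (simp add: k_def scale_sum_right psi_diff mult.commute)
  finally show ?thesis by (simp add: V_def mult.commute)
qed

lemma E2:
  assumes c: "c \<in> units_o val" and e: "e \<in> pp val K"
  shows "V (c + e) = V c"
proof -
  have c0: "c \<noteq> 0" using unit_nz[OF c] .
  define e' where "e' = 1 + e / c"
  have ec: "e / c \<in> pp val K" using pp_divide[OF e c0] unit_val[OF c] by simp
  have e'1: "e' - 1 \<in> pp val K" using ec by (simp add: e'_def)
  have e'u: "e' \<in> units_o val"
  proof -
    have "e / c \<in> pp val 0" "e / c \<in> pp val 1" using pp_mono[OF _ ec] K by auto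
    hence "e' \<in> pp val 0" using one_pp0 pp_add by (simp add: e'_def)
    moreover have "e' \<notin> pp val 1"
    proof
      assume "e' \<in> pp val 1"
      hence "e' - e / c \<in> pp val 1" using pp_diff \<open>e / c \<in> pp val 1\<close> by blast
      thus False using one_npp1 by (simp add: e'_def)
    qed
    ultimately show ?thesis using unit_iff by blast
  qed
  have e'0: "e' \<noteq> 0" using unit_nz[OF e'u] .
  have ce: "c + e = c * e'" using c0 by (simp add: e'_def field_simps)
  define k where "k y = sc (\<psi> (- (e' * y))) (D c (Z y v0))" for y
  have ck: "cinv (-K) K k" unfolding k_def
  proof (rule cinv_gen)
    show "\<forall>e\<in>pp val K. Z e v0 = v0" using ZK .
    show "0 \<le> K" using K by simp
    fix x e2 assume "e2 \<in> pp val K"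
    hence "e2 \<in> pp val 0" using pp_mono[of 0 K] K by simp
    hence "e' * e2 \<in> pp val 0" using pp_mult[OF unit_pp0[OF e'u]] by fastforce
    thus "- (e' * (x + e2)) - - (e' * x) \<in> pp val 0" by (simp add: algebra_simps)
  qed
  have step: "D (c + e) (Z x v0) = D c (Z (inverse e' * x) v0)" for x
  proof -
    have ee: "e' * (inverse e' * x) = x" using e'0 by (metis mult.assoc mult.left_neutral right_inverse)
    have "Z (inverse e' * x) (D e' v0) = D e' (Z x v0)" using ZD[OF e'0, of "inverse e' * x" v0] unfolding ee .
    hence "D e' (Z x v0) = Z (inverse e' * x) v0" using DK e'1 by simp
    thus ?thesis using D_mult[OF c0 e'0] ce by metis
  qed
  have kk: "k (inverse e' * x) = sc (\<psi> (-x)) (D (c + e) (Z x v0))" for x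
  proof -
    have ee: "e' * (inverse e' * x) = x" using e'0 by (metis mult.assoc mult.left_neutral right_inverse)
    show ?thesis unfolding k_def ee step ..
  qed
  have "V (c + e) = sc (1 / of_nat (card X)) (\<Sum>x\<in>X. k (inverse e' * x))"
    unfolding V_def kk ..
  also have "(\<Sum>x\<in>X. k (inverse e' * x)) = sum k X" using sum_scale[OF X unit_inv[OF e'u] ck] .
  also have "sum k X = (\<Sum>x\<in>X. sc (\<psi> (-x)) (D c (Z x v0)))"
  proof (rule sum.cong[OF refl])
    fix x assume "x \<in> X"
    hence x: "x \<in> pp val (-K)" using repsD(2)[OF X] by auto
    have "(e / c) * x \<in> pp val 0" using pp_mult[OF ec x] by simp
    hence "\<psi> (- ((e / c) * x)) = 1" using psi_o by simp
    hence "\<psi> (- (e' * x)) = \<psi> (-x)" using psi_add[of "-x" "- ((e / c) * x)"]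
      by (simp add: e'_def algebra_simps)
    thus "k x = sc (\<psi> (-x)) (D c (Z x v0))" by (simp add: k_def)
  qed
  finally show ?thesis by (simp add: V_def)
qed

lemma E3: "V 1 - v0 \<in> N"
proof -
  have "v0 = sc (1 / of_nat (card X)) (\<Sum>x\<in>X. v0)"
    using cX by (simp add: sum_constant_scale)
  hence "V 1 - v0 = sc (1 / of_nat (card X)) (\<Sum>x\<in>X. sc (\<psi> (-x)) (Z x v0) - v0)"
    by (simp add: V_def D1 sum_subtractf scale_right_diff_distrib)
  also have "\<dots> = sc (1 / of_nat (card X)) (\<Sum>x\<in>X. sc (\<psi> (-x)) (Z x v0 - sc (\<psi> x) v0))"
    by (simp add: scale_right_diff_distrib psi_neg)
  finally show ?thesis by (simp add: N_scale N_sum N_gen)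
qed

lemma E4:
  assumes c: "c \<in> units_o val" and c1: "c - 1 \<notin> pp val K"
  shows "V c \<in> N"
proof -
  define d where "d = c - 1"
  have dv: "d \<noteq> 0" "val d < K" using not_pp_val[OF c1] by (auto simp: d_def)
  have "d \<in> pp val 0" using pp_diff[OF unit_pp0[OF c] one_pp0] by (simp add: d_def)
  hence d0: "0 \<le> val d" using dv by (simp add: pp_iff)
  obtain t where t: "t \<in> pp val (-1)" "\<psi> t \<noteq> 1" using psi_nontriv by blast
  define y where "y = t / d"
  have "y \<in> pp val (-1 - val d)" using pp_divide[OF t(1) dv(1)] by (simp add: y_def)
  hence y: "y \<in> pp val (-K)" using pp_mono[of "-K" "-1 - val d"] dv by simp
  have cy: "c * y = y + t" using dv by (simp add: y_def d_def field_simps)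
  have "Z y (V c) - sc (\<psi> y) (V c) \<in> N" by (rule N_gen)
  hence "sc (\<psi> y * (\<psi> t - 1)) (V c) \<in> N"
    using E1[OF c y] by (simp add: cy psi_add algebra_simps scale_left_diff_distrib)
  moreover define a where "a = \<psi> y * (\<psi> t - 1)"
  ultimately have "sc (inverse a) (sc a (V c)) \<in> N" using N_scale by metis
  moreover have "a \<noteq> 0" using psi_nz[of y] t(2) by (simp add: a_def)
  ultimately show ?thesis by simp
qed

lemma E5: "cinv 0 K h"
  unfolding cinv_def
proof (intro ballI)
  fix c e assume c: "c \<in> pp val 0" and e: "e \<in> pp val K"
  have e1: "e \<in> pp val 1" using pp_mono[OF K e] .
  have iff: "c + e \<in> pp val 1 \<longleftrightarrow> c \<in> pp val 1"
    using pp_add[OF _ e1, of c] pp_diff[of "c + e" 1 e] e1 by auto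
  show "h (c + e) = h c"
  proof (cases "c \<in> pp val 1")
    case False
    hence "c \<in> units_o val" using unit_iff c by blast
    thus ?thesis using E2[OF _ e] False iff by (simp add: h_def)
  qed (simp add: h_def iff)
qed

lemma ex_ii: "y \<in> pp val 0 \<Longrightarrow> Z y vv = vv"
proof -
  assume y: "y \<in> pp val 0"
  have yK: "y \<in> pp val (-K)" using pp_mono[OF _ y] K by simp
  have "Z y (h c) = h c" if "c \<in> S" for c
  proof (cases "c \<in> pp val 1")
    case False
    hence cu: "c \<in> units_o val" using unit_iff repsD(2)[OF S] that by blast
    have "c * y \<in> pp val 0" using pp_mult[OF unit_pp0[OF cu] y] by simp
    thus ?thesis using E1[OF cu yK] False psi_o by (simp add: h_def)
  qed (simp add: h_def Z_lin)
  thus ?thesis by (simp add: vv_def Z_lin)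
qed

lemma ex_iii: "is_reps val (-1) 0 T \<Longrightarrow> (\<Sum>t\<in>T. Z t vv) = 0"
proof -
  assume T: "is_reps val (-1) 0 T"
  have "(\<Sum>t\<in>T. Z t (h c)) = 0" if "c \<in> S" for c
  proof (cases "c \<in> pp val 1")
    case False
    hence cu: "c \<in> units_o val" using unit_iff repsD(2)[OF S] that by blast
    have tK: "t \<in> pp val (-K)" if "t \<in> T" for t
      using pp_mono[of "-K" "-1" t] K repsD(2)[OF T] that by auto
    have "(\<Sum>t\<in>T. Z t (h c)) = (\<Sum>t\<in>T. sc (\<psi> (t * c)) (V c))"
      using E1[OF cu tK] False by (simp add: h_def mult.commute)
    also have "\<dots> = sc (\<Sum>t\<in>T. \<psi> (t * c)) (V c)" by (simp add: scale_sum_left)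
    also have "(\<Sum>t\<in>T. \<psi> (t * c)) = 0"
      using char_sum[OF T, of c] unit_pp0[OF cu] False by simp
    finally show ?thesis by simp
  qed (simp add: h_def Z_lin)
  hence "(\<Sum>c\<in>S. \<Sum>t\<in>T. Z t (h c)) = 0" by simp
  thus ?thesis by (simp add: vv_def Z_lin sum.swap[of _ S])
qed

lemma ex_iv: "c' \<in> units_o val \<Longrightarrow> D c' vv = vv"
proof -
  assume c': "c' \<in> units_o val"
  have c'0: "c' \<noteq> 0" using unit_nz[OF c'] .
  have "D c' (h c) = h (c' * c)" if "c \<in> S" for c
  proof (cases "c \<in> pp val 1")
    case True
    hence "c' * c \<in> pp val 1" using unit_mult_pp[OF c'] by blast
    thus ?thesis using True c'0 by (simp add: h_def D_lin)
  next
    case False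
    hence cu: "c \<in> units_o val" using unit_iff repsD(2)[OF S] that by blast
    have "c' * c \<notin> pp val 1" using unit_mult_pp[OF c'] False by blast
    moreover have "D c' (V c) = V (c' * c)"
      using c'0 unit_nz[OF cu] by (simp add: V_def D_lin D_mult)
    ultimately show ?thesis using False by (simp add: h_def)
  qed
  hence "D c' vv = (\<Sum>c\<in>S. h (c' * c))" by (simp add: vv_def D_lin[OF c'0])
  also have "\<dots> = vv" unfolding vv_def using sum_scale[OF S c' E5] .
  finally show ?thesis .
qed

lemma ex_i: "vv - v0 \<in> N"
proof -
  define P where "P c = (c - 1 \<in> pp val K)" for c
  obtain c1 where c1: "c1 \<in> S" "1 - c1 \<in> pp val K" using repsD(3)[OF S one_pp0] by blast
  have "{c\<in>S. P c} = {c1}"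
  proof safe
    fix c assume "c \<in> S" "P c"
    thus "c = c1" using reps_uniq[OF S one_pp0 _ c1(1)] c1 pp_swap unfolding P_def by blast
  qed (use c1 pp_swap in \<open>auto simp: P_def\<close>)
  hence s1: "(\<Sum>c\<in>S. if P c then v0 else 0) = v0"
    using sum.inter_filter[OF repsD(1)[OF S], of "\<lambda>_. v0" P] by simp
  have "h c - (if P c then v0 else 0) \<in> N" if c: "c \<in> S" for c
  proof (cases "c \<in> pp val 1")
    case True
    have "\<not> P c"
    proof
      assume "P c"
      hence "c - 1 \<in> pp val 1" using pp_mono[OF K] by (simp add: P_def)
      hence "c - (c - 1) \<in> pp val 1" using pp_diff True by blast
      thus False using one_npp1 by simp
    qed
    thus ?thesis using True N_zero by (simp add: h_def)
  next
    case False
    hence cu: "c \<in> units_o val" using unit_iff repsD(2)[OF S] that by blast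
    show ?thesis
    proof (cases "P c")
      case True
      have "V (1 + (c - 1)) = V 1" using E2[OF _ True[unfolded P_def]] unit_iff one_pp0 one_npp1 by blast
      thus ?thesis using True False E3 by (simp add: h_def)
    next
      case nP: False
      thus ?thesis using E4[OF cu] False by (simp add: h_def P_def)
    qed
  qed
  hence "(\<Sum>c\<in>S. h c - (if P c then v0 else 0)) \<in> N" by (rule N_sum)
  thus ?thesis using s1 by (simp add: vv_def sum_subtractf)
qed

end



theorem proposition7p2p3:
  fixes val :: "'a::field_char_0 \<Rightarrow> int"
    and \<psi> :: "'a \<Rightarrow> complex"
    and sc :: "complex \<Rightarrow> 'v::ab_group_add \<Rightarrow> 'v"
    and \<pi> :: "'a ^ 4 ^ 4 \<Rightarrow> 'v \<Rightarrow> 'v"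
  assumes "nonarch_local_field val"
    and "conductor_o_char val \<psi>"
    and "smooth_rep val sc \<pi>"
    and "w \<in> ZJ_coinv sc \<pi> \<psi>"
  shows "\<exists>!v. ZJ_proj sc \<pi> \<psi> v = w
             \<and> (\<forall>x\<in>pp val 0. \<pi> (zmat x) v = v)
             \<and> haar_int val sc (-1) (\<lambda>x. \<pi> (zmat x) v) = 0
             \<and> (\<forall>c\<in>units_o val. \<pi> (dmat c) v = v)"
proof -
  have vs: "vector_space sc" using assms(3) unfolding smooth_rep_def by blast
  interpret setting val sc \<psi> \<pi>
  proof (unfold_locales)
    show "nonarch_local_field val" using assms(1) .
    show "conductor_o_char val \<psi>" using assms(2) .
    show "smooth_rep val sc \<pi>" using assms(3) .
  qed (use vs[unfolded module_iff_vector_space[symmetric]] in \<open>auto simp: module_def\<close>)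
  obtain v0 where w: "w = ZJ_proj sc \<pi> \<psi> v0" using assms(4) unfolding ZJ_coinv_def by blast
  obtain T1 where T1: "is_reps val (-1) 0 T1" using reps_exist[of "-1" 0] by auto
  have haar: "haar_int val sc (-1) (\<lambda>x. Z x v) = (\<Sum>t\<in>T1. Z t v)" if "\<forall>y\<in>pp val 0. Z y v = v" for v
  proof (rule haar_eval[OF _ T1])
    show "cinv (-1) 0 (\<lambda>x. Z x v)" unfolding cinv_def
    proof (intro ballI)
      fix x y assume "y \<in> pp val 0"
      thus "Z (x + y) v = Z x v" using that Z_add[of x y v] by simp
    qed
  qed
  obtain K where K: "1 \<le> K" "\<forall>y\<in>pp val K. Z y v0 = v0" "\<forall>e. e - 1 \<in> pp val K \<longrightarrow> D e v0 = v0"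
    using smooth[of v0] by blast
  obtain X where X: "is_reps val (-K) K X" using reps_exist[of "-K" K] K by auto
  obtain S where S: "is_reps val 0 K S" using reps_exist[of 0 K] K by auto
  interpret E: exi val sc \<psi> \<pi> v0 K X S
    by (unfold_locales) (use K X S in auto)
  let ?P = "\<lambda>v. ZJ_proj sc \<pi> \<psi> v = w \<and> (\<forall>x\<in>pp val 0. \<pi> (zmat x) v = v)
             \<and> haar_int val sc (-1) (\<lambda>x. \<pi> (zmat x) v) = 0 \<and> (\<forall>c\<in>units_o val. \<pi> (dmat c) v = v)"
  show ?thesis
  proof (rule ex1I[of ?P E.vv])
    have ii: "\<forall>y\<in>pp val 0. Z y E.vv = E.vv" using E.ex_ii by blast
    show "?P E.vv"
      using proj_eq E.ex_i w ii haar[OF ii] E.ex_iii[OF T1] E.ex_iv by auto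
  next
    fix v assume v: "?P v"
    have ii: "\<forall>y\<in>pp val 0. Z y E.vv = E.vv" using E.ex_ii by blast
    have P1: "?P E.vv"
      using proj_eq E.ex_i w ii haar[OF ii] E.ex_iii[OF T1] E.ex_iv by auto
    define u where "u = v - E.vv"
    have "u \<in> N" using v P1 proj_eq[of v E.vv] by (simp add: u_def)
    moreover have "\<forall>y\<in>pp val 0. Z y u = u" using v P1 by (simp add: u_def Z_lin)
    moreover have "\<forall>c\<in>units_o val. D c u = u" using v P1 unit_nz by (simp add: u_def D_lin)
    moreover have "(\<Sum>t\<in>T1. Z t u) = 0"
    proof -
      have "(\<Sum>t\<in>T1. Z t v) = 0" using v haar[of v] by simp
      moreover have "(\<Sum>t\<in>T1. Z t E.vv) = 0" using E.ex_iii[OF T1] .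
      ultimately show ?thesis by (simp add: u_def Z_lin sum_subtractf)
    qed
    ultimately have "u = 0" using uniq[OF _ _ _ T1] by blast
    thus "v = E.vv" by (simp add: u_def)
  qed
qed


end
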